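(* Let $Q$ be a faithful quandle, $S$ a set and $\theta:Q\times Q\to\mathrm{Sym}_S$ a quandle cocycle. Then $Q\times_\theta S\cong Q\times_{\mathbf{1}}S$ if and only if $\theta$ is cohomologous to the trivial cocycle $\mathbf{1}$.
   Context: A quandle is a set $Q$ with a binary operation $*$ such that every left translation $L_x:y\mapsto x*y$ is bijective, $x*(y*z)=(x*y)*(x*z)$ and $x*x=x$. $Q$ is faithful if $L_x=L_y$ implies $x=y$. A quandle cocycle with values in $\mathrm{Sym}_S$ is $\theta:Q\times Q\to\mathrm{Sym}_S$ with $\theta_{x*y,x*z}\theta_{x,z}=\theta_{x,y*z}\theta_{y,z}$ and $\theta_{x,x}=1$; $\theta$ is cohomologous to $\mathbf{1}$ (the cocycle constantly equal to the identity) if there is $\gamma:Q\to\mathrm{Sym}_S$ with $\theta_{x,y}=\gamma_{x*y}\gamma_y^{-1}$ for all $x,y$. $Q\times_\theta S$ is the quandle on $Q\times S$ with $(x,a)*(y,b)=(x*y,\theta_{x,y}(b))$. *)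

theory Defs
  imports "HOL-Combinatorics.Permutations"
begin

definition quandle :: "'a set \<Rightarrow> ('a \<Rightarrow> 'a \<Rightarrow> 'a) \<Rightarrow> bool" where
  "quandle Q m \<longleftrightarrow>
     (\<forall>x\<in>Q. \<forall>y\<in>Q. m x y \<in> Q) \<and>
     (\<forall>x\<in>Q. bij_betw (m x) Q Q) \<and>
     (\<forall>x\<in>Q. \<forall>y\<in>Q. \<forall>z\<in>Q. m x (m y z) = m (m x y) (m x z)) \<and>
     (\<forall>x\<in>Q. m x x = x)"

definition faithful_quandle :: "'a set \<Rightarrow> ('a \<Rightarrow> 'a \<Rightarrow> 'a) \<Rightarrow> bool" where
  "faithful_quandle Q m \<longleftrightarrow>
     (\<forall>x\<in>Q. \<forall>y\<in>Q. (\<forall>z\<in>Q. m x z = m y z) \<longrightarrow> x = y)"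

text \<open>Elements of Sym_S are represented as permutations p with p permutes S.\<close>
definition quandle_cocycle ::
  "'a set \<Rightarrow> ('a \<Rightarrow> 'a \<Rightarrow> 'a) \<Rightarrow> 'b set \<Rightarrow> ('a \<Rightarrow> 'a \<Rightarrow> 'b \<Rightarrow> 'b) \<Rightarrow> bool" where
  "quandle_cocycle Q m S \<theta> \<longleftrightarrow>
     (\<forall>x\<in>Q. \<forall>y\<in>Q. \<theta> x y permutes S) \<and>
     (\<forall>x\<in>Q. \<forall>y\<in>Q. \<forall>z\<in>Q.
        \<theta> (m x y) (m x z) \<circ> \<theta> x z = \<theta> x (m y z) \<circ> \<theta> y z) \<and>
     (\<forall>x\<in>Q. \<theta> x x = id)"

definition cohomologous_to_trivial ::
  "'a set \<Rightarrow> ('a \<Rightarrow> 'a \<Rightarrow> 'a) \<Rightarrow> 'b set \<Rightarrow> ('a \<Rightarrow> 'a \<Rightarrow> 'b \<Rightarrow> 'b) \<Rightarrow> bool" where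
  "cohomologous_to_trivial Q m S \<theta> \<longleftrightarrow>
     (\<exists>\<gamma>. (\<forall>x\<in>Q. \<gamma> x permutes S) \<and>
          (\<forall>x\<in>Q. \<forall>y\<in>Q. \<theta> x y = \<gamma> (m x y) \<circ> inv (\<gamma> y)))"

definition ext_op :: "('a \<Rightarrow> 'a \<Rightarrow> 'a) \<Rightarrow> ('a \<Rightarrow> 'a \<Rightarrow> 'b \<Rightarrow> 'b) \<Rightarrow>
    'a \<times> 'b \<Rightarrow> 'a \<times> 'b \<Rightarrow> 'a \<times> 'b" where
  "ext_op m \<theta> u v = (m (fst u) (fst v), \<theta> (fst u) (fst v) (snd v))"

definition quandle_isomorphic ::
  "'c set \<Rightarrow> ('c \<Rightarrow> 'c \<Rightarrow> 'c) \<Rightarrow> 'd set \<Rightarrow> ('d \<Rightarrow> 'd \<Rightarrow> 'd) \<Rightarrow> bool" where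
  "quandle_isomorphic A p B q \<longleftrightarrow>
     (\<exists>f. bij_betw f A B \<and> (\<forall>u\<in>A. \<forall>v\<in>A. f (p u v) = q (f u) (f v)))"

end

theory Submission
  imports Defs
begin

lemma dir_if:
  assumes q: "quandle Q m" and c: "quandle_cocycle Q m S \<theta>"
    and h: "cohomologous_to_trivial Q m S \<theta>"
  shows "quandle_isomorphic (Q \<times> S) (ext_op m \<theta>) (Q \<times> S) (ext_op m (\<lambda>x y. id))"
proof -
  obtain \<gamma> where g: "\<And>x. x\<in>Q \<Longrightarrow> \<gamma> x permutes S"
    and e: "\<And>x y. x\<in>Q \<Longrightarrow> y\<in>Q \<Longrightarrow> \<theta> x y = \<gamma> (m x y) \<circ> inv (\<gamma> y)"
    using h unfolding cohomologous_to_trivial_def by blast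
  have mQ: "\<And>x y. x\<in>Q \<Longrightarrow> y\<in>Q \<Longrightarrow> m x y \<in> Q" using q unfolding quandle_def by blast
  define f where "f = (\<lambda>(x,a). (x, inv (\<gamma> x) a))"
  have "bij_betw f (Q \<times> S) (Q \<times> S)"
  proof (rule bij_betwI[where g="\<lambda>(x,a). (x, \<gamma> x a)"])
    show "f \<in> Q \<times> S \<rightarrow> Q \<times> S"
      using g permutes_inv permutes_in_image unfolding f_def by fastforce
    show "(\<lambda>(x,a). (x, \<gamma> x a)) \<in> Q \<times> S \<rightarrow> Q \<times> S"
      using g permutes_in_image by fastforce
    show "\<And>u. u \<in> Q \<times> S \<Longrightarrow> (\<lambda>(x,a). (x, \<gamma> x a)) (f u) = u"
      using g permutes_inverses unfolding f_def by fastforce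
    show "\<And>u. u \<in> Q \<times> S \<Longrightarrow> f ((\<lambda>(x,a). (x, \<gamma> x a)) u) = u"
      using g permutes_inverses unfolding f_def by fastforce
  qed
  moreover have "\<forall>u\<in>Q \<times> S. \<forall>v\<in>Q \<times> S. f (ext_op m \<theta> u v) = ext_op m (\<lambda>x y. id) (f u) (f v)"
  proof (intro ballI)
    fix u v assume u: "u \<in> Q \<times> S" and v: "v \<in> Q \<times> S"
    obtain x a y b where uv: "u = (x,a)" "v = (y,b)" by (cases u, cases v)
    with u v have x: "x\<in>Q" "y\<in>Q" by auto
    have "inv (\<gamma> (m x y)) (\<theta> x y b) = inv (\<gamma> y) b"
      using e[OF x] g[OF mQ[OF x]] by (simp add: permutes_inverses)
    then show "f (ext_op m \<theta> u v) = ext_op m (\<lambda>x y. id) (f u) (f v)"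
      unfolding uv f_def ext_op_def by simp
  qed
  ultimately show ?thesis unfolding quandle_isomorphic_def by blast
qed

lemma dir_only_if:
  assumes q: "quandle Q m" and fa: "faithful_quandle Q m" and c: "quandle_cocycle Q m S \<theta>"
    and iso: "quandle_isomorphic (Q \<times> S) (ext_op m \<theta>) (Q \<times> S) (ext_op m (\<lambda>x y. id))"
  shows "cohomologous_to_trivial Q m S \<theta>"
proof (cases "S = {}")
  case True
  have "\<And>x y. x\<in>Q \<Longrightarrow> y\<in>Q \<Longrightarrow> \<theta> x y = id"
    using c True unfolding quandle_cocycle_def by auto
  then show ?thesis unfolding cohomologous_to_trivial_def True
    by (intro exI[of _ "\<lambda>x. id"]) auto
next
  case False
  then obtain s0 where s0: "s0 \<in> S" by blast
  obtain f where fb: "bij_betw f (Q \<times> S) (Q \<times> S)"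
    and fh: "\<And>u v. u\<in>Q \<times> S \<Longrightarrow> v\<in>Q \<times> S \<Longrightarrow> f (ext_op m \<theta> u v) = ext_op m (\<lambda>x y. id) (f u) (f v)"
    using iso unfolding quandle_isomorphic_def by blast
  have mQ: "\<And>x y. x\<in>Q \<Longrightarrow> y\<in>Q \<Longrightarrow> m x y \<in> Q" using q unfolding quandle_def by blast
  have thS: "\<And>x y. x\<in>Q \<Longrightarrow> y\<in>Q \<Longrightarrow> \<theta> x y permutes S" using c unfolding quandle_cocycle_def by blast
  have fin: "\<And>u. u \<in> Q \<times> S \<Longrightarrow> f u \<in> Q \<times> S" using fb by (meson bij_betwE)
  have finj: "inj_on f (Q \<times> S)" using fb bij_betw_def by blast
  have fsurj: "\<And>w. w \<in> Q \<times> S \<Longrightarrow> \<exists>u\<in>Q \<times> S. w = f u" using fb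
    by (metis bij_betw_def imageE)
  have faithE: "\<And>x y. x\<in>Q \<Longrightarrow> y\<in>Q \<Longrightarrow> (\<And>z. z\<in>Q \<Longrightarrow> m x z = m y z) \<Longrightarrow> x = y"
    using fa unfolding faithful_quandle_def by blast
  define \<phi> where "\<phi> x = fst (f (x, s0))" for x
  have fib: "fst (f (x,a)) = \<phi> x" if x: "x\<in>Q" and a: "a\<in>S" for x a
  proof -
    have "fst (f (x,a)) \<in> Q" "fst (f (x,s0)) \<in> Q" using fin[of "(x,a)"] fin[of "(x,s0)"] x a s0 by (auto simp: mem_Times_iff)
    moreover have "m (fst (f (x,a))) z = m (fst (f (x,s0))) z" if z: "z\<in>Q" for z
    proof -
      obtain v where v: "v \<in> Q \<times> S" "(z, s0) = f v" using fsurj[of "(z,s0)"] z s0 by auto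
      have "ext_op m \<theta> (x,a) v = ext_op m \<theta> (x,s0) v" by (simp add: ext_op_def)
      then have "ext_op m (\<lambda>x y. id) (f (x,a)) (f v) = ext_op m (\<lambda>x y. id) (f (x,s0)) (f v)"
        using fh[of "(x,a)" v] fh[of "(x,s0)" v] v x a s0 by auto
      then show ?thesis using v(2)[symmetric] by (simp add: ext_op_def)
    qed
    ultimately show ?thesis unfolding \<phi>_def using faithE by blast
  qed
  have phinj: "x = x'" if x: "x\<in>Q" "x'\<in>Q" and e: "\<phi> x = \<phi> x'" for x x'
  proof (rule faithE[OF x])
    fix z assume z: "z \<in> Q"
    have "ext_op m (\<lambda>x y. id) (f (x,s0)) (f (z,s0)) = ext_op m (\<lambda>x y. id) (f (x',s0)) (f (z,s0))"
      using e unfolding \<phi>_def by (simp add: ext_op_def)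
    then have "f (ext_op m \<theta> (x,s0) (z,s0)) = f (ext_op m \<theta> (x',s0) (z,s0))"
      using fh x z s0 by auto
    moreover have "ext_op m \<theta> (x,s0) (z,s0) \<in> Q \<times> S" "ext_op m \<theta> (x',s0) (z,s0) \<in> Q \<times> S"
      using x z s0 mQ permutes_in_image[OF thS[OF x(1) z]] permutes_in_image[OF thS[OF x(2) z]] by (auto simp: ext_op_def)
    ultimately have "ext_op m \<theta> (x,s0) (z,s0) = ext_op m \<theta> (x',s0) (z,s0)"
      by (rule inj_onD[OF finj])
    then show "m x z = m x' z" by (simp add: ext_op_def)
  qed
  define \<delta> where "\<delta> x = (\<lambda>b. if b \<in> S then snd (f (x,b)) else b)" for x
  have dperm: "\<delta> x permutes S" if x: "x \<in> Q" for x
  proof (rule bij_imp_permutes)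
    show "\<And>b. b \<notin> S \<Longrightarrow> \<delta> x b = b" by (simp add: \<delta>_def)
    show "bij_betw (\<delta> x) S S" unfolding bij_betw_def
    proof (intro conjI)
      show "inj_on (\<delta> x) S"
      proof (rule inj_onI)
        fix a b assume ab: "a\<in>S" "b\<in>S" "\<delta> x a = \<delta> x b"
        then have "snd (f (x,a)) = snd (f (x,b))" using ab by (simp add: \<delta>_def)
        moreover have "fst (f (x,a)) = fst (f (x,b))" using fib x ab by simp
        ultimately have "f (x,a) = f (x,b)" by (simp add: prod_eq_iff)
        moreover have "(x,a) \<in> Q \<times> S" "(x,b) \<in> Q \<times> S" using x ab by auto
        ultimately have "(x,a) = (x,b)" by (rule inj_onD[OF finj])
        then show "a = b" by simp
      qed
      show "\<delta> x ` S = S"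
      proof
        show "\<delta> x ` S \<subseteq> S"
        proof
          fix c assume "c \<in> \<delta> x ` S"
          then obtain b where b: "b \<in> S" "c = \<delta> x b" by blast
          have "f (x,b) \<in> Q \<times> S" using fin x b by blast
          then show "c \<in> S" using b by (auto simp: \<delta>_def mem_Times_iff)
        qed
        show "S \<subseteq> \<delta> x ` S"
        proof
          fix c assume cS: "c \<in> S"
          obtain u where u: "u \<in> Q \<times> S" "(\<phi> x, c) = f u"
            using fsurj[of "(\<phi> x, c)"] cS fin[of "(x,s0)"] x s0 unfolding \<phi>_def by auto
          obtain x' a where ua: "u = (x',a)" by (cases u)
          with u have x': "x' \<in> Q" "a \<in> S" by auto
          have "\<phi> x' = \<phi> x" using fib[OF x'] u(2) unfolding ua by (metis fst_conv)
          then have "x' = x" using phinj x x' by blast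
          then have "c = snd (f (x, a))" using u(2) unfolding ua by (metis snd_conv)
          then have "c = \<delta> x a" using x' by (simp add: \<delta>_def)
          then show "c \<in> \<delta> x ` S" using x' by blast
        qed
      qed
    qed
  qed
  have key: "\<delta> (m x y) \<circ> \<theta> x y = \<delta> y" if x: "x\<in>Q" "y\<in>Q" for x y
  proof (rule ext)
    fix b
    show "(\<delta> (m x y) \<circ> \<theta> x y) b = \<delta> y b"
    proof (cases "b \<in> S")
      case True
      have tb: "\<theta> x y b \<in> S" using permutes_in_image[OF thS[OF x]] True by simp
      have mem: "(x,s0) \<in> Q \<times> S" "(y,b) \<in> Q \<times> S" using x s0 True by auto
      have e1: "ext_op m \<theta> (x,s0) (y,b) = (m x y, \<theta> x y b)" by (simp add: ext_op_def)
      have "f (m x y, \<theta> x y b) = ext_op m (\<lambda>x y. id) (f (x,s0)) (f (y,b))"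
        using fh[OF mem] unfolding e1 .
      then have "snd (f (m x y, \<theta> x y b)) = snd (f (y,b))" by (simp add: ext_op_def)
      then show ?thesis using True tb by (simp add: \<delta>_def)
    next
      case False
      then show ?thesis using thS[OF x] by (simp add: \<delta>_def permutes_not_in)
    qed
  qed
  show ?thesis unfolding cohomologous_to_trivial_def
  proof (intro exI[of _ "\<lambda>x. inv (\<delta> x)"] conjI ballI)
    fix x assume "x \<in> Q" then show "inv (\<delta> x) permutes S" using dperm permutes_inv by blast
  next
    fix x y assume x: "x \<in> Q" "y \<in> Q"
    have "inv (\<delta> (m x y)) \<circ> inv (inv (\<delta> y)) = inv (\<delta> (m x y)) \<circ> (\<delta> (m x y) \<circ> \<theta> x y)"
      unfolding key[OF x] permutes_inv_inv[OF dperm[OF x(2)]] ..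
    also have "\<dots> = \<theta> x y" using permutes_inv_o(2)[OF dperm[OF mQ[OF x]]]
      by (simp add: o_assoc)
    finally show "\<theta> x y = inv (\<delta> (m x y)) \<circ> inv (inv (\<delta> y))" by simp
  qed
qed

theorem lemma2p5:
  fixes Q :: "'a set" and m :: "'a \<Rightarrow> 'a \<Rightarrow> 'a"
    and S :: "'b set" and \<theta> :: "'a \<Rightarrow> 'a \<Rightarrow> 'b \<Rightarrow> 'b"
  assumes "quandle Q m" and "faithful_quandle Q m"
    and "quandle_cocycle Q m S \<theta>"
  shows "quandle_isomorphic (Q \<times> S) (ext_op m \<theta>) (Q \<times> S) (ext_op m (\<lambda>x y. id))
         \<longleftrightarrow> cohomologous_to_trivial Q m S \<theta>"
  using dir_if dir_only_if assms by blast

end
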